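(* Let $i,j\in[n]$ with $i\ne j$, $m\in[n-1]$, $\delta\ge0$ real and $r,t\ge0$ integers. Then $$\mathcal{P}^{n,t}_{1,m+1}\big([n]\times\overline{j\pm\delta}\big)\le\mathbb{P}^{n-1}_{id}\big(\Pi_t(1)>r\,\big|\,1\in A^t\big)+\mathbb{P}^{n-1}_{id}\big(\Pi_t(m)\in\overline{j\pm(\delta+r)}\,\big|\,m\in A^t\big).$$
   Context: The random-to-random insertions shuffle on a deck of $N$ cards numbered $1,\dots,N$: at each step a card is chosen uniformly at random, removed, and reinserted at a uniformly random position. Orderings are identified with $\sigma\in S_N$, $\sigma(k)$ being the position of card $k$; $\Pi_t$ is the induced random walk on $S_N$ and $\mathbb{P}^N_\sigma$ its law started at $\sigma$. $A^t$ is the (random) set of cards not chosen for removal in the first $t$ shuffles. For $k$ and $M\ge0$, $\overline{k\pm M}=[n]\cap[k-M,k+M]$. Fix distinct $i,j\in[n]$. For $m_1\in[n-1]$, $m_2\in[n]$ and an integer $t\ge0$, let $\sigma\in S_n$ be any permutation with $\sigma(j)=m_2$ and $\sigma(i)=m_1+1$ if $m_2\le m_1$, $\sigma(i)=m_1$ if $m_2>m_1$; define the probability measure on $[n]\times[n]$ $$\mathcal{P}^{n,t}_{m_1,m_2}(\cdot)=\mathbb{P}^n_\sigma\big((\Pi_t(i),\Pi_t(j))\in\cdot\,\big|\,i,j\in A^t\big),$$ which does not depend on the choice of $\sigma$ beyond $\sigma(i),\sigma(j)$. *)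

theory Defs
  imports "HOL-Probability.Probability"
begin

text \<open>A state is a permutation sigma (sigma permutes {1..N}), sigma k = position of card k.
  One shuffle step is given by a pair (c, q): card c is removed and reinserted so that
  it ends up at position q; both c and q are uniform in {1..N}, independently.\<close>

definition shuffle_step :: "(nat \<Rightarrow> nat) \<Rightarrow> nat \<times> nat \<Rightarrow> (nat \<Rightarrow> nat)" where
  "shuffle_step \<sigma> cq = (\<lambda>k. if k = fst cq then snd cq
      else (let p' = (if \<sigma> k > \<sigma> (fst cq) then \<sigma> k - 1 else \<sigma> k)
            in if p' \<ge> snd cq then p' + 1 else p'))"

definition run_shuffle :: "(nat \<Rightarrow> nat) \<Rightarrow> (nat \<times> nat) list \<Rightarrow> (nat \<Rightarrow> nat)" where
  "run_shuffle \<sigma> xs = fold (\<lambda>x s. shuffle_step s x) xs \<sigma>"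

definition shuffle_paths :: "nat \<Rightarrow> nat \<Rightarrow> (nat \<times> nat) list set" where
  "shuffle_paths N t = {xs. length xs = t \<and> set xs \<subseteq> {1..N} \<times> {1..N}}"

definition shuffle_law :: "nat \<Rightarrow> nat \<Rightarrow> (nat \<times> nat) list pmf" where
  "shuffle_law N t = pmf_of_set (shuffle_paths N t)"

text \<open>A^t: cards never chosen for removal during the shuffles xs.\<close>
definition unchosen :: "nat \<Rightarrow> (nat \<times> nat) list \<Rightarrow> nat set" where
  "unchosen N xs = {1..N} - fst ` set xs"

text \<open>P^N_sigma(Pi_t satisfies P | B subset A^t)  (elementary conditional probability).\<close>
definition cond_shuffle_prob ::
  "nat \<Rightarrow> nat \<Rightarrow> (nat \<Rightarrow> nat) \<Rightarrow> ((nat \<Rightarrow> nat) \<Rightarrow> bool) \<Rightarrow> nat set \<Rightarrow> real" where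
  "cond_shuffle_prob N t \<sigma> P B =
     measure_pmf.prob (shuffle_law N t) {xs. P (run_shuffle \<sigma> xs) \<and> B \<subseteq> unchosen N xs}
     / measure_pmf.prob (shuffle_law N t) {xs. B \<subseteq> unchosen N xs}"

text \<open>overline(k +- M) = [N] intersect [k-M, k+M].\<close>
definition nbhd :: "nat \<Rightarrow> nat \<Rightarrow> real \<Rightarrow> nat set" where
  "nbhd N k M = {x \<in> {1..N}. \<bar>real x - real k\<bar> \<le> M}"

text \<open>The measure script-P^{n,t}_{m1,m2} (for fixed distinct cards i, j), using a starting
  permutation sigma with sigma j = m2 and sigma i = m1+1 if m2 <= m1, sigma i = m1 otherwise.\<close>
definition start_perm :: "nat \<Rightarrow> nat \<Rightarrow> nat \<Rightarrow> nat \<Rightarrow> nat \<Rightarrow> (nat \<Rightarrow> nat)" where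
  "start_perm n i j m1 m2 = (SOME \<sigma>. \<sigma> permutes {1..n} \<and> \<sigma> j = m2 \<and>
      \<sigma> i = (if m2 \<le> m1 then m1 + 1 else m1))"

definition Pcal :: "nat \<Rightarrow> nat \<Rightarrow> nat \<Rightarrow> nat \<Rightarrow> nat \<Rightarrow> nat \<Rightarrow> (nat \<times> nat) set \<Rightarrow> real" where
  "Pcal n t i j m1 m2 S =
     cond_shuffle_prob n t (start_perm n i j m1 m2) (\<lambda>\<pi>. (\<pi> i, \<pi> j) \<in> S) {i, j}"

end

theory Submission
  imports Defs "HOL-Combinatorics.Permutations"
begin

definition rem :: "nat \<Rightarrow> nat \<Rightarrow> nat" where "rem v p = (if v > p then v - 1 else v)"
definition ins :: "nat \<Rightarrow> nat \<Rightarrow> nat" where "ins v q = (if v \<ge> q then v + 1 else v)"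
definition posstep :: "nat \<Rightarrow> nat \<Rightarrow> nat \<Rightarrow> nat" where "posstep v p q = ins (rem v p) q"

fun V :: "nat \<Rightarrow> nat set \<Rightarrow> ((nat \<Rightarrow> nat) \<Rightarrow> bool) \<Rightarrow> nat \<Rightarrow> (nat \<Rightarrow> nat) \<Rightarrow> real" where
  "V N B Q 0 \<rho> = (if Q \<rho> then 1 else 0)"
| "V N B Q (Suc t) \<rho> = (\<Sum>p\<in>{1..N} - \<rho> ` B. \<Sum>q\<in>{1..N}. V N B Q t (\<lambda>k. posstep (\<rho> k) p q))
       / (real (card ({1..N} - \<rho> ` B)) * real N)"

lemma V_nonneg: "V N B Q t \<rho> \<ge> 0"
  by (induction t arbitrary: \<rho>) (auto intro!: sum_nonneg divide_nonneg_nonneg)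

lemma V_cong:
  assumes Qd: "\<And>\<pi> \<pi>'. (\<forall>k\<in>B. \<pi> k = \<pi>' k) \<Longrightarrow> Q \<pi> = Q \<pi>'"
  shows "\<forall>k\<in>B. \<rho> k = \<rho>' k \<Longrightarrow> V N B Q t \<rho> = V N B Q t \<rho>'"
proof (induction t arbitrary: \<rho> \<rho>')
  case 0 then show ?case using Qd[of \<rho> \<rho>'] by simp
next
  case (Suc t)
  have im: "\<rho> ` B = \<rho>' ` B" using Suc.prems by (auto simp: image_def)
  have "\<And>p q. V N B Q t (\<lambda>k. posstep (\<rho> k) p q) = V N B Q t (\<lambda>k. posstep (\<rho>' k) p q)"
    by (rule Suc.IH) (use Suc.prems in auto)
  then show ?case by (simp add: im)
qed

lemma step_eq: "k \<noteq> c \<Longrightarrow> shuffle_step \<sigma> (c,q) k = posstep (\<sigma> k) (\<sigma> c) q"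
  by (simp add: shuffle_step_def posstep_def rem_def ins_def Let_def)

lemma step_bij:
  assumes b: "bij_betw \<sigma> {1..N} {1..N}" and c: "c \<in> {1..N}" and q: "q \<in> {1..N}"
  shows "bij_betw (shuffle_step \<sigma> (c,q)) {1..N} {1..N}"
proof -
  let ?f = "shuffle_step \<sigma> (c,q)"
  have inj: "inj_on \<sigma> {1..N}" and im: "\<sigma> ` {1..N} = {1..N}" using b by (auto simp: bij_betw_def)
  have sc: "\<sigma> c \<in> {1..N}" using c im by auto
  have sub: "?f ` {1..N} \<subseteq> {1..N}"
  proof
    fix y assume "y \<in> ?f ` {1..N}"
    then obtain k where k: "k \<in> {1..N}" "y = ?f k" by auto
    show "y \<in> {1..N}"
    proof (cases "k = c")
      case True then show ?thesis using k q by (simp add: shuffle_step_def)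
    next
      case False
      have sk: "\<sigma> k \<in> {1..N}" using k im by auto
      have "\<sigma> k \<noteq> \<sigma> c" using inj False k c by (auto dest: inj_onD)
      then show ?thesis using k False sk sc q by (auto simp: shuffle_step_def Let_def)
    qed
  qed
  have "inj_on ?f {1..N}"
  proof (rule inj_onI)
    fix a b assume a: "a \<in> {1..N}" and bb: "b \<in> {1..N}" and e: "?f a = ?f b"
    show "a = b"
    proof (rule ccontr)
      assume ne: "a \<noteq> b"
      have sa: "\<sigma> a \<in> {1..N}" "\<sigma> b \<in> {1..N}" using a bb im by auto
      have d: "\<sigma> a \<noteq> \<sigma> b" using inj ne a bb by (auto dest: inj_onD)
      have da: "a \<noteq> c \<Longrightarrow> \<sigma> a \<noteq> \<sigma> c" using inj a c by (auto dest: inj_onD)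
      have db: "b \<noteq> c \<Longrightarrow> \<sigma> b \<noteq> \<sigma> c" using inj bb c by (auto dest: inj_onD)
      show False using e d da db ne sa sc
        by (auto simp: shuffle_step_def Let_def split: if_splits)
    qed
  qed
  with sub show ?thesis by (simp add: bij_betw_def endo_inj_surj)
qed


definition Paths :: "nat \<Rightarrow> nat set \<Rightarrow> nat \<Rightarrow> (nat \<times> nat) list set" where
  "Paths N B t = {xs. set xs \<subseteq> ({1..N} - B) \<times> {1..N} \<and> length xs = t}"

definition R :: "nat \<Rightarrow> nat set \<Rightarrow> ((nat \<Rightarrow> nat) \<Rightarrow> bool) \<Rightarrow> nat \<Rightarrow> (nat \<Rightarrow> nat) \<Rightarrow> real" where
  "R N B Q t \<sigma> = card {xs \<in> Paths N B t. Q (run_shuffle \<sigma> xs)} / card (Paths N B t)"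

lemma finite_Paths: "finite (Paths N B t)"
  unfolding Paths_def by (rule finite_lists_length_eq) auto

lemma card_Paths: "card (Paths N B t) = card (({1..N} - B) \<times> {1..N}) ^ t"
  unfolding Paths_def by (rule card_lists_length_eq) auto

lemma run_Cons: "run_shuffle \<sigma> (x # xs) = run_shuffle (shuffle_step \<sigma> x) xs"
  by (simp add: run_shuffle_def)

lemma card_Paths_Suc_filter:
  "card {xs \<in> Paths N B (Suc t). P xs} =
     (\<Sum>x\<in>({1..N} - B) \<times> {1..N}. card {xs \<in> Paths N B t. P (x # xs)})"
proof -
  let ?X = "({1..N} - B) \<times> {1..N}"
  have eq: "{xs \<in> Paths N B (Suc t). P xs} =
      (\<lambda>(x,xs). x # xs) ` (SIGMA x:?X. {xs \<in> Paths N B t. P (x # xs)})"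
    by (auto simp: Paths_def length_Suc_conv image_iff)
  have inj: "inj_on (\<lambda>(x,xs). x # xs) (SIGMA x:?X. {xs \<in> Paths N B t. P (x # xs)})"
    by (auto simp: inj_on_def)
  have fin: "\<And>x. finite {xs \<in> Paths N B t. P (x # xs)}" using finite_Paths by auto
  show ?thesis unfolding eq card_image[OF inj]
    by (rule card_SigmaI) (auto simp: fin)
qed

lemma R_Suc:
  "R N B Q (Suc t) \<sigma> = (\<Sum>x\<in>({1..N} - B) \<times> {1..N}. R N B Q t (shuffle_step \<sigma> x))
      / card (({1..N} - B) \<times> {1..N})"
proof -
  let ?X = "({1..N} - B) \<times> {1..N}"
  let ?c = "card ?X"
  have num: "card {xs \<in> Paths N B (Suc t). Q (run_shuffle \<sigma> xs)} =
      (\<Sum>x\<in>?X. card {xs \<in> Paths N B t. Q (run_shuffle (shuffle_step \<sigma> x) xs)})"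
    using card_Paths_Suc_filter[of N B t "\<lambda>xs. Q (run_shuffle \<sigma> xs)"] by (simp add: run_Cons)
  show ?thesis
  proof (cases "?c = 0")
    case True
    then have "?X = {}" by (auto simp: card_eq_0_iff)
    show ?thesis unfolding R_def card_Paths \<open>?X = {}\<close> by simp
  next
    case False
    have "R N B Q (Suc t) \<sigma> =
        (\<Sum>x\<in>?X. real (card {xs \<in> Paths N B t. Q (run_shuffle (shuffle_step \<sigma> x) xs)}))
          / (real ?c * real ?c ^ t)"
      unfolding R_def num card_Paths by simp
    also have "\<dots> = (\<Sum>x\<in>?X. real (card {xs \<in> Paths N B t. Q (run_shuffle (shuffle_step \<sigma> x) xs)})
          / real ?c ^ t) / real ?c"
      by (simp add: sum_divide_distrib field_simps)
    also have "\<dots> = (\<Sum>x\<in>?X. R N B Q t (shuffle_step \<sigma> x)) / ?c"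
      by (simp add: R_def card_Paths)
    finally show ?thesis .
  qed
qed

lemma R_V:
  assumes Qd: "\<And>\<pi> \<pi>'. (\<forall>k\<in>B. \<pi> k = \<pi>' k) \<Longrightarrow> Q \<pi> = Q \<pi>'"
    and BN: "B \<subseteq> {1..N}"
  shows "bij_betw \<sigma> {1..N} {1..N} \<Longrightarrow> R N B Q t \<sigma> = V N B Q t \<sigma>"
proof (induction t arbitrary: \<sigma>)
  case 0
  have "Paths N B 0 = {[]}" by (auto simp: Paths_def)
  moreover have "{xs \<in> Paths N B 0. Q (run_shuffle \<sigma> xs)} = (if Q \<sigma> then {[]} else {})"
    by (auto simp: Paths_def run_shuffle_def)
  ultimately show ?case by (simp add: R_def)
next
  case (Suc t)
  have inj: "inj_on \<sigma> {1..N}" and im: "\<sigma> ` {1..N} = {1..N}" using Suc.prems by (auto simp: bij_betw_def)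
  have im2: "\<sigma> ` ({1..N} - B) = {1..N} - \<sigma> ` B"
    using inj im BN by (auto simp: inj_on_image_set_diff)
  have inj2: "inj_on \<sigma> ({1..N} - B)" using inj by (rule inj_on_subset) auto
  have cardeq: "card ({1..N} - \<sigma> ` B) = card ({1..N} - B)"
    using card_image[OF inj2] im2 by simp
  have "R N B Q (Suc t) \<sigma> = (\<Sum>x\<in>({1..N} - B) \<times> {1..N}. V N B Q t (shuffle_step \<sigma> x))
      / card (({1..N} - B) \<times> {1..N})"
    unfolding R_Suc
    by (intro arg_cong2[where f="(/)"] sum.cong refl Suc.IH, clarify, rule step_bij[OF Suc.prems]) auto
  also have "(\<Sum>x\<in>({1..N} - B) \<times> {1..N}. V N B Q t (shuffle_step \<sigma> x)) =
      (\<Sum>c\<in>{1..N} - B. \<Sum>q\<in>{1..N}. V N B Q t (\<lambda>k. posstep (\<sigma> k) (\<sigma> c) q))"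
    unfolding sum.cartesian_product
    by (intro sum.cong refl, clarify, rule V_cong[OF Qd], simp) (auto, metis step_eq)
  also have "\<dots> = (\<Sum>p\<in>{1..N} - \<sigma> ` B. \<Sum>q\<in>{1..N}. V N B Q t (\<lambda>k. posstep (\<sigma> k) p q))"
    using sum.reindex[OF inj2, of "\<lambda>p. \<Sum>q\<in>{1..N}. V N B Q t (\<lambda>k. posstep (\<sigma> k) p q)"] im2
    by simp
  finally show ?case using cardeq by (simp add: card_cartesian_product)
qed

lemma cond_R:
  assumes "N \<ge> 1" and "B \<subseteq> {1..N}"
  shows "cond_shuffle_prob N t \<sigma> Q B = R N B Q t \<sigma>"
proof -
  let ?S = "shuffle_paths N t"
  have fin: "finite ?S" unfolding shuffle_paths_def
    using finite_lists_length_eq[of "{1..N} \<times> {1..N}" t] by (simp add: conj_commute)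
  have "replicate t (1,1) \<in> ?S" using assms by (auto simp: shuffle_paths_def)
  then have ne: "?S \<noteq> {}" by auto
  have e1: "?S \<inter> {xs. B \<subseteq> unchosen N xs} = Paths N B t"
    using assms(2) by (auto simp: shuffle_paths_def Paths_def unchosen_def; force)
  have e2: "?S \<inter> {xs. Q (run_shuffle \<sigma> xs) \<and> B \<subseteq> unchosen N xs} = {xs \<in> Paths N B t. Q (run_shuffle \<sigma> xs)}"
    using assms(2) by (auto simp: shuffle_paths_def Paths_def unchosen_def; force)
  have cS: "card ?S > 0" using fin ne by (simp add: card_gt_0_iff)
  show ?thesis
    unfolding cond_shuffle_prob_def shuffle_law_def
    by (simp add: measure_pmf_of_set[OF ne fin] e1 e2 R_def) (use cS in simp)
qed


definition E1 :: "nat \<Rightarrow> nat \<Rightarrow> nat \<Rightarrow> nat set" where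
  "E1 x y z = {x<..<y} \<union> {1..z+x-y}"
definition E2 :: "nat \<Rightarrow> nat \<Rightarrow> nat \<Rightarrow> nat set" where
  "E2 x y w = (if w < y then {1..w} - {x} else {1..w+1} - {x,y})"
definition D1 :: "nat \<Rightarrow> nat \<Rightarrow> nat \<Rightarrow> nat set" where
  "D1 x1 y1 z1 = {x1<..y1} \<union> {1..z1+x1-y1}"
definition Inv :: "nat \<Rightarrow> nat \<Rightarrow> nat \<Rightarrow> nat \<Rightarrow> nat \<Rightarrow> bool" where
  "Inv n x y z w \<longleftrightarrow> 1 \<le> x \<and> x < y \<and> y \<le> n \<and> y - x \<le> z \<and> z < y \<and> x \<le> w \<and> w \<le> n - 1"

lemma rem_xy:
  assumes "1 \<le> x" "x < y" "y \<le> n" "p \<in> {1..n} - {x,y}"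
  shows "1 \<le> rem x p \<and> rem x p < rem y p \<and> rem y p \<le> n - 1"
  using assms unfolding rem_def by auto

lemma rem_z:
  assumes "1 \<le> x" "x < y" "y \<le> n" "y - x \<le> z" "z < y" "p \<in> {1..n} - {x,y}"
    and z1: "z1 = (if p \<in> E1 x y z then z - 1 else z)"
  shows "rem y p - rem x p \<le> z1 \<and> z1 < rem y p"
proof -
  have "p < x \<or> (x < p \<and> p < y) \<or> y < p" using assms(6) by auto
  then show ?thesis
  proof (elim disjE)
    assume a: "p < x"
    then show ?thesis using assms by (auto simp: rem_def E1_def)
  next
    assume a: "x < p \<and> p < y"
    then show ?thesis using assms by (auto simp: rem_def E1_def)
  next
    assume a: "y < p"
    then show ?thesis using assms by (auto simp: rem_def E1_def)
  qed
qed

lemma rem_w: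
  assumes "1 \<le> x" "x < y" "y \<le> n" "x \<le> w" "w \<le> n - 1" "p \<in> {1..n} - {x,y}"
    and w1: "w1 = (if p \<in> E2 x y w then w - 1 else w)"
  shows "rem x p \<le> w1 \<and> w1 \<le> n - 2"
proof (cases "w < y")
  case True
  then show ?thesis using assms by (auto simp: rem_def E2_def)
next
  case False
  then show ?thesis using assms by (auto simp: rem_def E2_def)
qed

lemma ins_xy:
  assumes "1 \<le> x1" "x1 < y1" "y1 \<le> n - 1" "q \<in> {1..n}"
  shows "1 \<le> ins x1 q \<and> ins x1 q < ins y1 q \<and> ins y1 q \<le> n"
  using assms unfolding ins_def by auto

lemma ins_z:
  assumes "1 \<le> x1" "x1 < y1" "y1 - x1 \<le> z1" "z1 < y1" "q \<in> {1..n}"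
    and zz: "zz \<in> {z1, z1+1}" and zz2: "q \<noteq> x1 \<Longrightarrow> zz = (if q \<in> D1 x1 y1 z1 then z1 + 1 else z1)"
  shows "ins y1 q - ins x1 q \<le> zz \<and> zz < ins y1 q"
proof -
  have "q < x1 \<or> q = x1 \<or> (x1 < q \<and> q \<le> y1) \<or> y1 < q" by auto
  then show ?thesis
  proof (elim disjE)
    assume "q < x1" then show ?thesis using assms by (auto simp: ins_def D1_def)
  next
    assume "q = x1" then show ?thesis using assms by (auto simp: ins_def D1_def)
  next
    assume "x1 < q \<and> q \<le> y1" then show ?thesis using assms by (auto simp: ins_def D1_def)
  next
    assume "y1 < q" then show ?thesis using assms by (auto simp: ins_def D1_def)
  qed
qed

lemma ins_w:
  assumes "1 \<le> x1" "x1 \<le> w1" "w1 \<le> n - 2" "q \<in> {1..n}"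
    and ww: "ww \<in> {w1, w1+1}" and ww2: "q \<noteq> n \<Longrightarrow> ww = (if q \<in> {1..w1} then w1 + 1 else w1)"
  shows "ins x1 q \<le> ww \<and> ww \<le> n - 1"
  using assms by (auto simp: ins_def split: if_splits)

lemma inv_step:
  assumes I: "Inv n x y z w" and p: "p \<in> {1..n} - {x,y}" and q: "q \<in> {1..n}"
    and z1: "z1 = (if p \<in> E1 x y z then z - 1 else z)"
    and w1: "w1 = (if p \<in> E2 x y w then w - 1 else w)"
    and zz: "zz \<in> {z1, z1+1}" and zz2: "q \<noteq> rem x p \<Longrightarrow> zz = (if q \<in> D1 (rem x p) (rem y p) z1 then z1 + 1 else z1)"
    and ww: "ww \<in> {w1, w1+1}" and ww2: "q \<noteq> n \<Longrightarrow> ww = (if q \<in> {1..w1} then w1 + 1 else w1)"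
  shows "Inv n (posstep x p q) (posstep y p q) zz ww"
proof -
  have I': "1 \<le> x" "x < y" "y \<le> n" "y - x \<le> z" "z < y" "x \<le> w" "w \<le> n - 1"
    using I by (auto simp: Inv_def)
  note a = rem_xy[OF I'(1-3) p]
  note b = rem_z[OF I'(1-5) p z1]
  note c = rem_w[OF I'(1-3) I'(6-7) p w1]
  note d = ins_xy[of "rem x p" "rem y p" n q] a q
  have e: "ins (rem y p) q - ins (rem x p) q \<le> zz \<and> zz < ins (rem y p) q"
    by (rule ins_z) (use a b q zz zz2 in auto)
  have f: "ins (rem x p) q \<le> ww \<and> ww \<le> n - 1"
    by (rule ins_w) (use a c q ww ww2 in auto)
  show ?thesis unfolding Inv_def posstep_def using d e f a by auto
qed


lemma E1_props:
  assumes "1 \<le> x" "x < y" "y \<le> n" "y - x \<le> z" "z < y"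
  shows "E1 x y z \<subseteq> {1..n} - {x,y}" "card (E1 x y z) = z - 1"
proof -
  show "E1 x y z \<subseteq> {1..n} - {x,y}" using assms by (auto simp: E1_def)
  have disj: "{x<..<y} \<inter> {1..z+x-y} = {}" using assms by auto
  have "card (E1 x y z) = card {x<..<y} + card {1..z+x-y}"
    unfolding E1_def by (rule card_Un_disjoint) (use disj in auto)
  then show "card (E1 x y z) = z - 1" using assms by simp
qed

lemma E2_props:
  assumes "1 \<le> x" "x < y" "y \<le> n" "x \<le> w" "w \<le> n - 1"
  shows "E2 x y w \<subseteq> {1..n} - {x,y}" "card (E2 x y w) = w - 1"
proof -
  show "E2 x y w \<subseteq> {1..n} - {x,y}" using assms by (auto simp: E2_def)
  show "card (E2 x y w) = w - 1"
  proof (cases "w < y")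
    case True
    then show ?thesis using assms by (simp add: E2_def card_Diff_singleton)
  next
    case False
    have "card ({1..w+1} - {x,y}) = card {1..w+1} - card {x,y}"
      by (rule card_Diff_subset) (use False assms in auto)
    then show ?thesis using False assms by (simp add: E2_def)
  qed
qed

lemma D1_props:
  assumes "1 \<le> x1" "x1 < y1" "y1 \<le> n - 1" "y1 - x1 \<le> z1" "z1 < y1"
  shows "D1 x1 y1 z1 \<subseteq> {1..n} - {x1}" "card (D1 x1 y1 z1) = z1"
proof -
  show "D1 x1 y1 z1 \<subseteq> {1..n} - {x1}" using assms by (auto simp: D1_def)
  have disj: "{x1<..y1} \<inter> {1..z1+x1-y1} = {}" using assms by auto
  have "card (D1 x1 y1 z1) = card {x1<..y1} + card {1..z1+x1-y1}"
    unfolding D1_def by (rule card_Un_disjoint) (use disj in auto)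
  then show "card (D1 x1 y1 z1) = z1" using assms by simp
qed

lemma sum_ins:
  assumes "v \<le> N"
  shows "(\<Sum>q\<in>{1..N}. h (ins v q)) = real v * h (v+1) + real (N - v) * (h v :: real)"
proof -
  have u: "{1..N} = {1..v} \<union> {v+1..N}" using assms by auto
  have "(\<Sum>q\<in>{1..N}. h (ins v q)) = (\<Sum>q\<in>{1..v}. h (ins v q)) + (\<Sum>q\<in>{v+1..N}. h (ins v q))"
    unfolding u by (rule sum.union_disjoint) auto
  also have "(\<Sum>q\<in>{1..v}. h (ins v q)) = (\<Sum>q\<in>{1..v}. h (v+1))"
    by (rule sum.cong) (auto simp: ins_def)
  also have "(\<Sum>q\<in>{v+1..N}. h (ins v q)) = (\<Sum>q\<in>{v+1..N}. h v)"
    by (rule sum.cong) (auto simp: ins_def)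
  finally show ?thesis by simp
qed

lemma sum_rem:
  assumes "1 \<le> v" "v \<le> N"
  shows "(\<Sum>p\<in>{1..N} - {v}. K (rem v p)) = real (v - 1) * K (v - 1) + real (N - v) * (K v :: real)"
proof -
  have u: "{1..N} - {v} = {1..v-1} \<union> {v+1..N}" using assms by auto
  have "(\<Sum>p\<in>{1..N} - {v}. K (rem v p)) = (\<Sum>p\<in>{1..v-1}. K (rem v p)) + (\<Sum>p\<in>{v+1..N}. K (rem v p))"
    unfolding u by (rule sum.union_disjoint) auto
  also have "(\<Sum>p\<in>{1..v-1}. K (rem v p)) = (\<Sum>p\<in>{1..v-1}. K (v - 1))"
    by (rule sum.cong) (auto simp: rem_def)
  also have "(\<Sum>p\<in>{v+1..N}. K (rem v p)) = (\<Sum>p\<in>{v+1..N}. K v)"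
    by (rule sum.cong) (auto simp: rem_def)
  finally show ?thesis using assms by simp
qed

lemma sum_E:
  assumes "finite S" "E \<subseteq> S"
  shows "(\<Sum>p\<in>S. K (if p \<in> E then a else b)) = real (card E) * K a + real (card S - card E) * (K b :: real)"
proof -
  have "(\<Sum>p\<in>S. K (if p \<in> E then a else b)) = (\<Sum>p\<in>S. if p \<in> E then K a else K b)"
    by (rule sum.cong) auto
  also have "\<dots> = (\<Sum>p\<in>S \<inter> E. K a) + (\<Sum>p\<in>S \<inter> - E. K b)"
    using sum.If_cases[OF assms(1), of "\<lambda>p. p \<in> E" "\<lambda>_. K a" "\<lambda>_. K b"] by simp
  also have "S \<inter> E = E" using assms by auto
  also have "S \<inter> - E = S - E" by auto
  finally show ?thesis using assms by (simp add: card_Diff_subset finite_subset)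
qed

lemma sum_D:
  assumes "finite A" "a \<in> A" "D \<subseteq> A - {a}"
  shows "(\<Sum>q\<in>A. if q = a then c else if q \<in> D then u else v) =
     c + real (card D) * u + real (card A - 1 - card D) * (v :: real)"
proof -
  have "(\<Sum>q\<in>A. if q = a then c else if q \<in> D then u else v) =
      c + (\<Sum>q\<in>A - {a}. if q = a then c else if q \<in> D then u else v)"
    using assms by (simp add: sum.remove)
  also have "(\<Sum>q\<in>A - {a}. if q = a then c else if q \<in> D then u else v) =
      (\<Sum>q\<in>A - {a}. if q \<in> D then u else v)" by (rule sum.cong) auto
  also have "\<dots> = real (card D) * u + real (card (A - {a}) - card D) * v"
    using sum_E[of "A - {a}" D "\<lambda>x. x" u v] assms by simp
  also have "card (A - {a}) = card A - 1" using assms by simp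
  finally show ?thesis by simp
qed

lemma conv:
  fixes a u v g :: real
  assumes "a \<le> u + g" "a \<le> v + g" "k \<le> N" "0 < N"
  shows "a \<le> (real k * u + real (N - k) * v) / real N + g"
proof -
  have "real N * (a - g) = real k * (a - g) + real (N - k) * (a - g)" using assms(3)
    by (simp add: of_nat_diff algebra_simps)
  also have "\<dots> \<le> real k * u + real (N - k) * v"
    using assms by (intro add_mono mult_left_mono) auto
  finally have "real N * (a - g) \<le> real k * u + real (N - k) * v" .
  then show ?thesis using assms(4) by (simp add: field_simps)
qed


definition PV :: "nat \<Rightarrow> nat \<Rightarrow> nat \<Rightarrow> real \<Rightarrow> nat \<Rightarrow> nat \<Rightarrow> nat \<Rightarrow> real" where
  "PV n i j \<delta> t x y = V n {i,j} (\<lambda>\<pi>. (\<pi> i, \<pi> j) \<in> {1..n} \<times> nbhd n j \<delta>) t (\<lambda>k. if k = i then x else y)"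

definition SV :: "nat \<Rightarrow> ((nat \<Rightarrow> nat) \<Rightarrow> bool) \<Rightarrow> nat \<Rightarrow> nat \<Rightarrow> nat \<Rightarrow> real" where
  "SV N Q k t v = V N {k} Q t (\<lambda>_. v)"

lemma PV_0: "i \<noteq> j \<Longrightarrow> PV n i j \<delta> 0 x y = (if x \<in> {1..n} \<and> y \<in> nbhd n j \<delta> then 1 else 0)"
  by (simp add: PV_def)

lemma PV_Suc: "i \<noteq> j \<Longrightarrow> PV n i j \<delta> (Suc t) x y =
   (\<Sum>p\<in>{1..n} - {x,y}. \<Sum>q\<in>{1..n}. PV n i j \<delta> t (posstep x p q) (posstep y p q))
     / (real (card ({1..n} - {x,y})) * real n)"
proof -
  assume ij: "i \<noteq> j"
  have im: "(\<lambda>k. if k = i then x else y) ` {i,j} = {x,y}" using ij by auto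
  have f: "\<And>p q. (\<lambda>k. posstep (if k = i then x else y) p q) = (\<lambda>k. if k = i then posstep x p q else posstep y p q)"
    by auto
  show ?thesis unfolding PV_def by (simp only: V.simps im f)
qed

lemma SV_0: "SV N Q k 0 v = (if Q (\<lambda>_. v) then 1 else 0)"
  by (simp add: SV_def)

lemma SV_Suc: "SV N Q k (Suc t) v =
   (\<Sum>p\<in>{1..N} - {v}. \<Sum>q\<in>{1..N}. SV N Q k t (posstep v p q)) / (real (card ({1..N} - {v})) * real N)"
  by (simp add: SV_def)

lemma SV_nonneg: "SV N Q k t v \<ge> 0" by (simp add: SV_def V_nonneg)
lemma PV_nonneg: "PV n i j \<delta> t x y \<ge> 0" by (simp add: PV_def V_nonneg)

lemma coupling:
  fixes n i j m r t :: nat and \<delta> :: real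
  assumes ij: "i \<noteq> j"
  defines "G \<equiv> SV (n-1) (\<lambda>\<pi>. r < \<pi> 1) 1"
    and "H \<equiv> SV (n-1) (\<lambda>\<pi>. \<pi> m \<in> nbhd n j (\<delta> + real r)) m"
  shows "Inv n x y z w \<Longrightarrow> PV n i j \<delta> t x y \<le> G t w + H t z"
proof (induction t arbitrary: x y z w)
  case 0
  then have I: "1 \<le> x" "x < y" "y \<le> n" "y - x \<le> z" "z < y" "x \<le> w" "w \<le> n - 1"
    by (auto simp: Inv_def)
  show ?case
  proof (cases "y \<in> nbhd n j \<delta> \<and> \<not> r < w")
    case True
    have yz: "real y \<le> real z + real x" "real z < real y" using I by auto
    have "z \<in> nbhd n j (\<delta> + real r)"
      using True I yz unfolding nbhd_def by auto
    then show ?thesis using ij by (simp add: PV_0 G_def H_def SV_0)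
  next
    case False
    then show ?thesis using ij by (auto simp: PV_0 G_def H_def SV_0)
  qed
next
  case (Suc t)
  then have I: "1 \<le> x" "x < y" "y \<le> n" "y - x \<le> z" "z < y" "x \<le> w" "w \<le> n - 1"
    by (auto simp: Inv_def)
  let ?P = "{1..n} - {x,y}"
  have cardP: "card ?P = n - 2" using I by (simp add: card_Diff_subset)
  show ?case
  proof (cases "n = 2")
    case True
    then have "?P = {}" using I by auto
    then have "PV n i j \<delta> (Suc t) x y = 0" using ij by (simp add: PV_Suc)
    then show ?thesis using SV_nonneg[of "n-1"] by (simp add: G_def H_def add_nonneg_nonneg)
  next
    case False
    then have n3: "n \<ge> 3" using I by auto
    define Kh where "Kh v = (\<Sum>q\<in>{1..n-1}. H t (ins v q)) / real (n-1)" for v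
    define Kg where "Kg v = (\<Sum>q\<in>{1..n-1}. G t (ins v q)) / real (n-1)" for v
    define z1 where "z1 p = (if p \<in> E1 x y z then z - 1 else z)" for p
    define w1 where "w1 p = (if p \<in> E2 x y w then w - 1 else w)" for p
    have Kh_eq: "Kh v = (real v * H t (v+1) + real (n - 1 - v) * H t v) / real (n-1)" if "v \<le> n-1" for v
      unfolding Kh_def using sum_ins[OF that, of "H t"] by simp
    have Kg_eq: "Kg v = (real v * G t (v+1) + real (n - 1 - v) * G t v) / real (n-1)" if "v \<le> n-1" for v
      unfolding Kg_def using sum_ins[OF that, of "G t"] by simp
    have Hs: "real (n-2) * H (Suc t) z = (\<Sum>p\<in>?P. Kh (z1 p))"
    proof -
      have "z \<in> {1..n-1}" using I by auto
      then have c1: "card ({1..n-1} - {z}) = n - 2" by (simp add: card_Diff_singleton)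
      have "H (Suc t) z = (\<Sum>p\<in>{1..n-1} - {z}. real (n-1) * Kh (rem z p)) / (real (n-2) * real (n-1))"
        unfolding H_def SV_Suc c1 using n3 by (simp add: Kh_def H_def posstep_def)
      also have "\<dots> = (\<Sum>p\<in>{1..n-1} - {z}. Kh (rem z p)) / real (n-2)"
        using n3 by (simp add: sum_distrib_left[symmetric])
      also have "(\<Sum>p\<in>{1..n-1} - {z}. Kh (rem z p)) = real (z - 1) * Kh (z - 1) + real (n - 1 - z) * Kh z"
        by (rule sum_rem) (use I in auto)
      finally have a: "real (n-2) * H (Suc t) z = real (z - 1) * Kh (z - 1) + real (n - 1 - z) * Kh z"
        using n3 by simp
      have "(\<Sum>p\<in>?P. Kh (z1 p)) = real (card (E1 x y z)) * Kh (z-1) + real (card ?P - card (E1 x y z)) * Kh z"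
        unfolding z1_def by (rule sum_E) (use E1_props(1)[OF I(1-5)] in auto)
      also have "\<dots> = real (z - 1) * Kh (z - 1) + real (n - 1 - z) * Kh z"
        using E1_props(2)[OF I(1-5)] cardP I by simp
      finally show ?thesis using a by simp
    qed
    have Gs: "real (n-2) * G (Suc t) w = (\<Sum>p\<in>?P. Kg (w1 p))"
    proof -
      have "w \<in> {1..n-1}" using I by auto
      then have c1: "card ({1..n-1} - {w}) = n - 2" by (simp add: card_Diff_singleton)
      have "G (Suc t) w = (\<Sum>p\<in>{1..n-1} - {w}. real (n-1) * Kg (rem w p)) / (real (n-2) * real (n-1))"
        unfolding G_def SV_Suc c1 using n3 by (simp add: Kg_def G_def posstep_def)
      also have "\<dots> = (\<Sum>p\<in>{1..n-1} - {w}. Kg (rem w p)) / real (n-2)"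
        using n3 by (simp add: sum_distrib_left[symmetric])
      also have "(\<Sum>p\<in>{1..n-1} - {w}. Kg (rem w p)) = real (w - 1) * Kg (w - 1) + real (n - 1 - w) * Kg w"
        by (rule sum_rem) (use I in auto)
      finally have a: "real (n-2) * G (Suc t) w = real (w - 1) * Kg (w - 1) + real (n - 1 - w) * Kg w"
        using n3 by simp
      have "(\<Sum>p\<in>?P. Kg (w1 p)) = real (card (E2 x y w)) * Kg (w-1) + real (card ?P - card (E2 x y w)) * Kg w"
        unfolding w1_def by (rule sum_E) (use E2_props(1)[OF I(1-3) I(6-7)] in auto)
      also have "\<dots> = real (w - 1) * Kg (w - 1) + real (n - 1 - w) * Kg w"
        using E2_props(2)[OF I(1-3) I(6-7)] cardP I by simp
      finally show ?thesis using a by simp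
    qed
    have step1: "(\<Sum>q\<in>{1..n}. PV n i j \<delta> t (posstep x p q) (posstep y p q)) \<le> real n * (Kh (z1 p) + Kg (w1 p))"
      if p: "p \<in> ?P" for p
    proof -
      define x1 where "x1 = rem x p"
      define y1 where "y1 = rem y p"
      define zp where "zp = z1 p"
      define wp where "wp = w1 p"
      have A: "1 \<le> x1" "x1 < y1" "y1 \<le> n - 1" using rem_xy[OF I(1-3) p] by (auto simp: x1_def y1_def)
      have B: "y1 - x1 \<le> zp" "zp < y1" using rem_z[OF I(1-5) p] by (auto simp: x1_def y1_def zp_def z1_def)
      have C: "x1 \<le> wp" "wp \<le> n - 2" using rem_w[OF I(1-3) I(6-7) p] by (auto simp: x1_def wp_def w1_def)
      define Hh where "Hh q = (if q = x1 then Kh zp else if q \<in> D1 x1 y1 zp then H t (zp+1) else H t zp)" for q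
      define Gg where "Gg q = (if q = n then Kg wp else if q \<in> {1..wp} then G t (wp+1) else G t wp)" for q
      have zpn: "zp \<le> n - 1" "wp \<le> n - 1" using A B C by auto
      have sH: "(\<Sum>q\<in>{1..n}. Hh q) = real n * Kh zp"
      proof -
        have "(\<Sum>q\<in>{1..n}. Hh q) = Kh zp + real (card (D1 x1 y1 zp)) * H t (zp+1) + real (n - 1 - card (D1 x1 y1 zp)) * H t zp"
          unfolding Hh_def using sum_D[of "{1..n}" x1 "D1 x1 y1 zp" "Kh zp" "H t (zp+1)" "H t zp"] A D1_props(1)[OF A B] by auto
        also have "\<dots> = Kh zp + real (n-1) * Kh zp"
          using D1_props(2)[OF A B] Kh_eq[OF zpn(1)] n3 by simp
        finally show ?thesis using n3 by (simp add: algebra_simps of_nat_diff)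
      qed
      have sG: "(\<Sum>q\<in>{1..n}. Gg q) = real n * Kg wp"
      proof -
        have "(\<Sum>q\<in>{1..n}. Gg q) = Kg wp + real (card {1..wp}) * G t (wp+1) + real (n - 1 - card {1..wp}) * G t wp"
        proof -
          have "{1..wp} \<subseteq> {1..n} - {n}" using C n3 by auto
          then show ?thesis unfolding Gg_def using sum_D[of "{1..n}" n "{1..wp}" "Kg wp" "G t (wp+1)" "G t wp"] n3 by simp
        qed
        also have "\<dots> = Kg wp + real (n-1) * Kg wp"
          using Kg_eq[OF zpn(2)] n3 by simp
        finally show ?thesis using n3 by (simp add: algebra_simps of_nat_diff)
      qed
      have IS: "Inv n (posstep x p q) (posstep y p q) zz ww"
        if "q \<in> {1..n}" "zz \<in> {zp, zp+1}" "q \<noteq> x1 \<Longrightarrow> zz = (if q \<in> D1 x1 y1 zp then zp + 1 else zp)"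
           "ww \<in> {wp, wp+1}" "q \<noteq> n \<Longrightarrow> ww = (if q \<in> {1..wp} then wp + 1 else wp)" for q zz ww
        by (rule inv_step[OF Suc.prems p that(1) refl refl]) (use that in \<open>auto simp: x1_def y1_def zp_def wp_def z1_def w1_def\<close>)
      have pw: "PV n i j \<delta> t (posstep x p q) (posstep y p q) \<le> Hh q + Gg q" if q: "q \<in> {1..n}" for q
      proof -
        let ?a = "PV n i j \<delta> t (posstep x p q) (posstep y p q)"
        let ?zd = "if q \<in> D1 x1 y1 zp then zp + 1 else zp"
        let ?wd = "if q \<in> {1..wp} then wp + 1 else wp"
        show ?thesis
        proof (cases "q = x1")
          case True
          then have qn: "q \<noteq> n" using A by auto
          have h1: "?a \<le> H t (zp+1) + G t ?wd" using Suc.IH[OF IS[OF q, of "zp+1" ?wd]] qn True by auto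
          have h2: "?a \<le> H t zp + G t ?wd" using Suc.IH[OF IS[OF q, of "zp" ?wd]] qn True by auto
          have "?a \<le> (real zp * H t (zp+1) + real (n - 1 - zp) * H t zp) / real (n-1) + G t ?wd"
            by (rule conv[OF h1 h2]) (use zpn n3 in auto)
          moreover have "Gg q = G t ?wd" unfolding Gg_def using qn by simp
          moreover have "Hh q = Kh zp" unfolding Hh_def using True by simp
          ultimately show ?thesis using Kh_eq[OF zpn(1)] by simp
        next
          case False
          show ?thesis
          proof (cases "q = n")
            case True
            have h1: "?a \<le> G t (wp+1) + H t ?zd" using Suc.IH[OF IS[OF q, of ?zd "wp+1"]] False True
              by (auto simp: add.commute)
            have h2: "?a \<le> G t wp + H t ?zd" using Suc.IH[OF IS[OF q, of ?zd "wp"]] False True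
              by (auto simp: add.commute)
            have "?a \<le> (real wp * G t (wp+1) + real (n - 1 - wp) * G t wp) / real (n-1) + H t ?zd"
              by (rule conv[OF h1 h2]) (use zpn n3 in auto)
            moreover have "Hh q = H t ?zd" unfolding Hh_def using False by simp
            moreover have "Gg q = Kg wp" unfolding Gg_def using True by simp
            ultimately show ?thesis using Kg_eq[OF zpn(2)] by simp
          next
            case False2: False
            have "?a \<le> G t ?wd + H t ?zd" using Suc.IH[OF IS[OF q, of ?zd ?wd]] False False2 by auto
            moreover have "Hh q = H t ?zd" unfolding Hh_def using False by simp
            moreover have "Gg q = G t ?wd" unfolding Gg_def using False2 by simp
            ultimately show ?thesis by simp
          qed
        qed
      qed
      have "(\<Sum>q\<in>{1..n}. PV n i j \<delta> t (posstep x p q) (posstep y p q)) \<le> (\<Sum>q\<in>{1..n}. Hh q + Gg q)"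
        by (rule sum_mono) (rule pw)
      also have "\<dots> = real n * (Kh zp + Kg wp)" unfolding sum.distrib sH sG by (simp add: algebra_simps)
      finally show ?thesis by (simp add: zp_def wp_def)
    qed
    have "PV n i j \<delta> (Suc t) x y =
        (\<Sum>p\<in>?P. \<Sum>q\<in>{1..n}. PV n i j \<delta> t (posstep x p q) (posstep y p q)) / (real (n-2) * real n)"
      using ij cardP by (simp add: PV_Suc)
    also have "\<dots> \<le> (\<Sum>p\<in>?P. real n * (Kh (z1 p) + Kg (w1 p))) / (real (n-2) * real n)"
      by (intro divide_right_mono sum_mono step1) auto
    also have "\<dots> = ((\<Sum>p\<in>?P. Kh (z1 p)) + (\<Sum>p\<in>?P. Kg (w1 p))) / real (n-2)"
      using n3 by (simp add: sum_distrib_left[symmetric] sum.distrib)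
    also have "\<dots> = G (Suc t) w + H (Suc t) z"
    proof -
      have e: "(\<Sum>p\<in>?P. Kh (z1 p)) + (\<Sum>p\<in>?P. Kg (w1 p)) = real (n-2) * (G (Suc t) w + H (Suc t) z)"
        using Hs Gs by (simp add: algebra_simps)
      have "real (n-2) > 0" using n3 by simp
      then show ?thesis unfolding e by simp
    qed
    finally show ?thesis .
  qed
qed


theorem lemma6:
  fixes n i j m r t :: nat and \<delta> :: real
  assumes "i \<in> {1..n}" and "j \<in> {1..n}" and "i \<noteq> j"
    and "m \<in> {1..n-1}" and "\<delta> \<ge> 0"
  shows "Pcal n t i j 1 (m + 1) ({1..n} \<times> nbhd n j \<delta>)
     \<le> cond_shuffle_prob (n - 1) t id (\<lambda>\<pi>. \<pi> 1 > r) {1}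
      + cond_shuffle_prob (n - 1) t id (\<lambda>\<pi>. \<pi> m \<in> nbhd n j (\<delta> + real r)) {m}"
proof -
  have ij: "i \<noteq> j" by fact
  have mn: "1 \<le> m" "m \<le> n - 1" using assms(4) by auto
  have n2: "n \<ge> 2" using mn by auto
  define \<tau> where "\<tau> = Transposition.transpose i (1::nat)"
  define \<sigma>1 where "\<sigma>1 = Transposition.transpose (\<tau> j) (m+1) \<circ> \<tau>"
  have tj: "\<tau> j \<noteq> 1" "\<tau> j \<in> {1..n}" using assms(1,2,3) n2 by (auto simp: \<tau>_def Transposition.transpose_def)
  have ex: "\<exists>\<sigma>. \<sigma> permutes {1..n} \<and> \<sigma> j = m + 1 \<and> \<sigma> i = (if m + 1 \<le> 1 then 1 + 1 else 1)"
  proof (intro exI conjI)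
    show "\<sigma>1 permutes {1..n}" unfolding \<sigma>1_def
      by (rule permutes_compose) (use assms(1) tj mn n2 in \<open>auto simp: \<tau>_def intro!: permutes_swap_id\<close>)
    show "\<sigma>1 j = m + 1" by (simp add: \<sigma>1_def)
    show "\<sigma>1 i = (if m + 1 \<le> 1 then 1 + 1 else 1)" using tj mn by (simp add: \<sigma>1_def \<tau>_def Transposition.transpose_def)
  qed
  define \<sigma>0 where "\<sigma>0 = start_perm n i j 1 (m+1)"
  have s0: "\<sigma>0 permutes {1..n}" "\<sigma>0 j = m + 1" "\<sigma>0 i = 1"
    using someI_ex[OF ex] mn unfolding \<sigma>0_def start_perm_def by auto
  let ?Qf = "\<lambda>\<pi>. (\<pi> i, \<pi> j) \<in> {1..n} \<times> nbhd n j \<delta>"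
  let ?Qg = "\<lambda>\<pi>. r < \<pi> (1::nat)"
  let ?Qh = "\<lambda>\<pi>. \<pi> m \<in> nbhd n j (\<delta> + real r)"
  have L: "Pcal n t i j 1 (m + 1) ({1..n} \<times> nbhd n j \<delta>) = PV n i j \<delta> t 1 (m+1)"
  proof -
    have "Pcal n t i j 1 (m + 1) ({1..n} \<times> nbhd n j \<delta>) = R n {i,j} ?Qf t \<sigma>0"
      unfolding Pcal_def \<sigma>0_def[symmetric] by (rule cond_R) (use assms n2 in auto)
    also have "\<dots> = V n {i,j} ?Qf t \<sigma>0"
      by (rule R_V) (use assms s0 permutes_imp_bij in auto)
    also have "\<dots> = V n {i,j} ?Qf t (\<lambda>k. if k = i then 1 else m + 1)"
      by (rule V_cong) (use s0 in auto)
    finally show ?thesis unfolding PV_def .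
  qed
  have G: "cond_shuffle_prob (n - 1) t id ?Qg {1} = SV (n-1) ?Qg 1 t 1"
  proof -
    have "cond_shuffle_prob (n - 1) t id ?Qg {1} = R (n-1) {1} ?Qg t id"
      by (rule cond_R) (use n2 in auto)
    also have "\<dots> = V (n-1) {1} ?Qg t id"
      by (rule R_V) (use n2 in auto)
    also have "\<dots> = V (n-1) {1} ?Qg t (\<lambda>_. 1)"
      by (rule V_cong) auto
    finally show ?thesis by (simp add: SV_def)
  qed
  have H: "cond_shuffle_prob (n - 1) t id ?Qh {m} = SV (n-1) ?Qh m t m"
  proof -
    have "cond_shuffle_prob (n - 1) t id ?Qh {m} = R (n-1) {m} ?Qh t id"
      by (rule cond_R) (use n2 mn in auto)
    also have "\<dots> = V (n-1) {m} ?Qh t id"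
      by (rule R_V) (use mn in auto)
    also have "\<dots> = V (n-1) {m} ?Qh t (\<lambda>_. m)"
      by (rule V_cong) auto
    finally show ?thesis by (simp add: SV_def)
  qed
  have I: "Inv n 1 (m+1) m 1" using mn n2 by (simp add: Inv_def)
  show ?thesis unfolding L G H using coupling[OF ij I] by simp
qed

end
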